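(* In $D_n$ the following hold. (1) For all $1\le p<q\le n-1$: $w_q\cdot w_p=w_p\cdot w_q$. (2) For $1\le p<q\le n$ with $p\le n-1$ and $1\le i_q\le q-1$: $$t_{q}^{i_{q}} \cdot w_{p}=\begin{cases} w_{i_{q}} \cdot t_{q}^{i_{q}} & q= p + i_{q}, \\ w_{i_{q}} \cdot w_{p+i_{q}} \cdot t_{q}^{i_{q}} & q > p + i_{q}, \\ w_{p+i_{q}-q} \cdot w_{i_{q}} \cdot t_{q}^{i_{q}} & q < p + i_{q}. \end{cases}$$ (3) For $2\le p<q\le n-1$ and $1\le i_p\le p-1$: $w_q\cdot t_p^{i_p}=w_{i_p}\cdot t_p^{i_p}\cdot w_q$.
   Context: $D_n$ ($n\ge 2$) is the Coxeter group with generators $s_{1'},s_1,\dots,s_{n-1}$ and relations $s^2=1$, $(s_i s_{i+1})^3=1$, $(s_is_j)^2=1$ for $|i-j|\ge 2$, $(s_{1'}s_2)^3=1$, $(s_{1'}s_i)^2=1$ for $i\ne 2$. For $2\le k\le n$, $t_k=s_1s_2\cdots s_{k-1}$; for $1\le k\le n-1$, $w_k=s_k s_{k-1}\cdots s_2 s_1 s_{1'} s_2\cdots s_k$. *)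

theory Defs
  imports Main
begin

text \<open>Generators of D_n: S1' is s_{1'}, S i is s_i (1 <= i <= n-1).
  The group D_n is the quotient of the free monoid on these letters by the
  congruence generated by the Coxeter relators (presentation).\<close>

datatype gen = S1' | S nat

definition valid_gen :: "nat \<Rightarrow> gen \<Rightarrow> bool" where
  "valid_gen n g = (case g of S1' \<Rightarrow> True | S i \<Rightarrow> 1 \<le> i \<and> i \<le> n - 1)"

inductive relator :: "nat \<Rightarrow> gen list \<Rightarrow> bool" for n where
  sq: "valid_gen n s \<Longrightarrow> relator n [s, s]"
| braid3: "1 \<le> i \<Longrightarrow> i + 1 \<le> n - 1 \<Longrightarrow>
     relator n (concat (replicate 3 [S i, S (i+1)]))"
| comm: "1 \<le> i \<Longrightarrow> i \<le> n - 1 \<Longrightarrow> 1 \<le> j \<Longrightarrow> j \<le> n - 1 \<Longrightarrow>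
     i + 2 \<le> j \<or> j + 2 \<le> i \<Longrightarrow> relator n [S i, S j, S i, S j]"
| braid3' : "2 \<le> n - 1 \<Longrightarrow> relator n (concat (replicate 3 [S1', S 2]))"
| comm' : "1 \<le> i \<Longrightarrow> i \<le> n - 1 \<Longrightarrow> i \<noteq> 2 \<Longrightarrow> relator n [S1', S i, S1', S i]"

inductive deq :: "nat \<Rightarrow> gen list \<Rightarrow> gen list \<Rightarrow> bool" for n where
  refl: "deq n u u"
| sym: "deq n u v \<Longrightarrow> deq n v u"
| trans: "deq n u v \<Longrightarrow> deq n v w \<Longrightarrow> deq n u w"
| rel: "relator n r \<Longrightarrow> deq n (u @ r @ v) (u @ v)"

definition tw :: "nat \<Rightarrow> gen list" where
  "tw k = map S [1..<k]"

definition tpow :: "nat \<Rightarrow> nat \<Rightarrow> gen list" where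
  "tpow k i = concat (replicate i (tw k))"

definition ww :: "nat \<Rightarrow> gen list" where
  "ww k = rev (map S [1..<k+1]) @ [S1'] @ map S [2..<k+1]"

end

theory Submission imports Defs begin

lemma deq_cong: "deq n u v \<Longrightarrow> deq n (a @ u @ b) (a @ v @ b)"
proof (induction rule: deq.induct)
  case (rel r u v)
  have "deq n ((a @ u) @ r @ (v @ b)) ((a @ u) @ (v @ b))" by (rule deq.rel[OF rel])
  then show ?case by simp
qed (auto intro: deq.intros)

lemma deq_trans[trans]: "deq n u v \<Longrightarrow> deq n v w \<Longrightarrow> deq n u w" by (rule deq.trans)

lemma stepI: "deq n u v \<Longrightarrow> X = a @ u @ b \<Longrightarrow> Y = a @ v @ b \<Longrightarrow> deq n X Y"
  using deq_cong by blast

lemma stepS: "deq n v u \<Longrightarrow> X = a @ u @ b \<Longrightarrow> Y = a @ v @ b \<Longrightarrow> deq n X Y"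
  using deq_cong deq.sym by blast

definition vw :: "nat \<Rightarrow> gen list \<Rightarrow> bool" where "vw n w = (\<forall>g\<in>set w. valid_gen n g)"

definition RR :: "nat \<Rightarrow> nat \<Rightarrow> nat \<Rightarrow> gen list" where
  "RR p q i = (if q = p + i then ww i @ tpow q i
               else if q > p + i then ww i @ ww (p + i) @ tpow q i
               else ww (p + i - q) @ ww i @ tpow q i)"

context fixes n :: nat assumes n2: "n \<ge> 2" begin

abbreviation eqv (infix "\<sim>" 50) where "u \<sim> v \<equiv> deq n u v"

lemma vS: "1 \<le> i \<Longrightarrow> i \<le> n - 1 \<Longrightarrow> valid_gen n (S i)" by (simp add: valid_gen_def)
lemma vP: "valid_gen n S1'" by (simp add: valid_gen_def)

lemma gg: "valid_gen n g \<Longrightarrow> [g,g] \<sim> []"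
  using deq.rel[OF relator.sq, of n g "[]" "[]"] by simp

lemma ggS: "1 \<le> i \<Longrightarrow> i \<le> n - 1 \<Longrightarrow> [S i, S i] \<sim> []" using gg vS by blast
lemma ggP: "[S1', S1'] \<sim> []" using gg vP by blast

lemma commSS: assumes "1 \<le> i" "i \<le> n - 1" "1 \<le> j" "j \<le> n - 1" "i + 2 \<le> j \<or> j + 2 \<le> i"
  shows "[S i, S j] \<sim> [S j, S i]"
proof -
  have r: "relator n [S i, S j, S i, S j]" using relator.comm assms by blast
  have "[S j, S i] \<sim> [S i, S j, S i, S j] @ [S j, S i]"
    using deq.sym[OF deq.rel[OF r, of "[]" "[S j, S i]"]] by simp
  also have "\<dots> \<sim> [S i, S j, S i] @ [] @ [S i]" by (rule stepI[OF ggS[of j], where a="[S i, S j, S i]" and b="[S i]"]) (use assms in simp_all)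
  also have "\<dots> \<sim> [S i, S j]" by (rule stepI[OF ggS[of i], where a="[S i, S j]" and b="[]"]) (use assms in simp_all)
  finally show ?thesis by (rule deq.sym)
qed

lemma commPS: assumes "1 \<le> i" "i \<le> n - 1" "i \<noteq> 2"
  shows "[S1', S i] \<sim> [S i, S1']"
proof -
  have r: "relator n [S1', S i, S1', S i]" using relator.comm' assms by blast
  have "[S i, S1'] \<sim> [S1', S i, S1', S i] @ [S i, S1']"
    using deq.sym[OF deq.rel[OF r, of "[]" "[S i, S1']"]] by simp
  also have "\<dots> \<sim> [S1', S i, S1'] @ [] @ [S1']" by (rule stepI[OF ggS[of i], where a="[S1', S i, S1']" and b="[S1']"]) (use assms in simp_all)
  also have "\<dots> \<sim> [S1', S i]" by (rule stepI[OF ggP, where a="[S1', S i]" and b="[]"]) simp_all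
  finally show ?thesis by (rule deq.sym)
qed

lemma braid_gen: assumes r: "relator n (concat (replicate 3 [x, y]))" and vx: "valid_gen n x" and vy: "valid_gen n y"
  shows "[x, y, x] \<sim> [y, x, y]"
proof -
  have "[y, x, y] \<sim> [x, y, x, y, x, y] @ [y, x, y]"
    using deq.sym[OF deq.rel[OF r, of "[]" "[y, x, y]"]] by (simp add: numeral_3_eq_3)
  also have "\<dots> \<sim> [x, y, x, y, x] @ [] @ [x, y]" by (rule stepI[OF gg[OF vy], where a="[x, y, x, y, x]" and b="[x, y]"]) simp_all
  also have "\<dots> \<sim> [x, y, x, y] @ [] @ [y]" by (rule stepI[OF gg[OF vx], where a="[x, y, x, y]" and b="[y]"]) simp_all
  also have "\<dots> \<sim> [x, y, x] @ [] @ []" by (rule stepI[OF gg[OF vy], where a="[x, y, x]" and b="[]"]) simp_all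
  finally show ?thesis by (auto intro: deq.sym)
qed

lemma braid: "1 \<le> i \<Longrightarrow> Suc i \<le> n - 1 \<Longrightarrow> [S i, S (Suc i), S i] \<sim> [S (Suc i), S i, S (Suc i)]"
  by (rule braid_gen) (use relator.braid3[of i n] in \<open>auto simp: valid_gen_def\<close>)

lemma braidP: "[S1', S 2, S1'] \<sim> [S 2, S1', S 2]" if "3 \<le> n"
  by (rule braid_gen) (use that in \<open>auto intro: relator.braid3' simp: valid_gen_def\<close>)

lemma inv: "vw n w \<Longrightarrow> w @ rev w \<sim> []"
proof (induction w)
  case Nil then show ?case by (simp add: deq.refl)
next
  case (Cons x w)
  have "(x # w) @ rev (x # w) = [x] @ (w @ rev w) @ [x]" by simp
  moreover have "[x] @ (w @ rev w) @ [x] \<sim> [x] @ [] @ [x]"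
    by (rule deq_cong) (use Cons in \<open>simp add: vw_def\<close>)
  moreover have "[x] @ [] @ [x] \<sim> []" using gg Cons.prems by (simp add: vw_def)
  ultimately show ?case using deq.trans by metis
qed

lemma inv': "vw n w \<Longrightarrow> rev w @ w \<sim> []"
  using inv[of "rev w"] by (simp add: vw_def)

lemma comm_word: "(\<forall>h\<in>set w. [g, h] \<sim> [h, g]) \<Longrightarrow> [g] @ w \<sim> w @ [g]"
proof (induction w)
  case Nil then show ?case by (simp add: deq.refl)
next
  case (Cons h w)
  have "[g] @ (h # w) \<sim> [h, g] @ w" using deq_cong[of n "[g,h]" "[h,g]" "[]" w] Cons.prems by simp
  also have "\<dots> \<sim> [h] @ (w @ [g]) @ []" using deq_cong[OF Cons.IH, of "[h]" "[]"] Cons.prems by simp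
  finally show ?case by simp
qed

lemma comm_words: "(\<forall>g\<in>set u. [g] @ w \<sim> w @ [g]) \<Longrightarrow> u @ w \<sim> w @ u"
proof (induction u)
  case Nil then show ?case by (simp add: deq.refl)
next
  case (Cons g u)
  have "(g # u) @ w \<sim> [g] @ (w @ u) @ []" using deq_cong[OF Cons.IH, of "[g]" "[]"] Cons.prems by simp
  also have "\<dots> \<sim> (w @ [g]) @ u" using deq_cong[of n "[g] @ w" "w @ [g]" "[]" u] Cons.prems by simp
  finally show ?case by simp
qed


lemma ww_Suc: "1 \<le> k \<Longrightarrow> ww (Suc k) = [S (Suc k)] @ ww k @ [S (Suc k)]"
  by (simp add: ww_def)
lemma ww1: "ww 1 = [S 1, S1']" by (simp add: ww_def)
lemma ww2: "ww 2 = [S 2, S 1, S1', S 2]" by (simp add: ww_def numeral_2_eq_2)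

lemma set_ww: "h \<in> set (ww k) \<Longrightarrow> h = S1' \<or> (\<exists>m. h = S m \<and> 1 \<le> m \<and> m \<le> k)"
  by (auto simp: ww_def)

lemma vw_ww: "k \<le> n - 1 \<Longrightarrow> vw n (ww k)"
  unfolding vw_def by (auto dest!: set_ww simp: valid_gen_def)

lemma W2: assumes "1 \<le> k" "k + 2 \<le> j" "j \<le> n - 1" shows "[S j] @ ww k \<sim> ww k @ [S j]"
proof (rule comm_word, intro ballI)
  fix h assume "h \<in> set (ww k)"
  then consider "h = S1'" | m where "h = S m" "1 \<le> m" "m \<le> k" using set_ww by blast
  then show "[S j, h] \<sim> [h, S j]"
  proof cases
    case 1 then show ?thesis using commPS[of j] assms by (auto intro: deq.sym)
  next
    case 2 then show ?thesis using commSS[of j m] assms by auto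
  qed
qed

lemma W2w: assumes "1 \<le> k" "k + 2 \<le> a" "b \<le> n" shows "map S [a..<b] @ ww k \<sim> ww k @ map S [a..<b]"
  by (rule comm_words) (use W2 assms in auto)

lemma ww_inv: "1 \<le> k \<Longrightarrow> k \<le> n - 1 \<Longrightarrow> ww k @ ww k \<sim> []"
proof (induction k rule: nat_induct_at_least)
  case base
  have "ww 1 @ ww 1 = [S 1] @ [S1', S 1] @ [S1']" by (simp add: ww_def)
  also have "\<dots> \<sim> [S 1] @ [S 1, S1'] @ [S1']" by (rule stepI[OF commPS[of 1], where a="[S 1]" and b="[S1']"]) (use n2 in simp_all)
  also have "\<dots> \<sim> [] @ [] @ [S1', S1']" by (rule stepI[OF ggS[of 1], where a="[]" and b="[S1', S1']"]) (use n2 in simp_all)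
  also have "\<dots> \<sim> []" using ggP by simp
  finally show ?case .
next
  case (Suc k)
  have "ww (Suc k) @ ww (Suc k) = [S (Suc k)] @ (ww k @ [S (Suc k), S (Suc k)] @ ww k) @ [S (Suc k)]"
    using Suc by (simp add: ww_Suc)
  also have "\<dots> \<sim> [S (Suc k)] @ (ww k @ [] @ ww k) @ [S (Suc k)]"
    by (rule stepI[OF ggS, where a="[S (Suc k)] @ ww k" and b="ww k @ [S (Suc k)]"]) (use Suc in auto)
  also have "\<dots> \<sim> [S (Suc k)] @ [] @ [S (Suc k)]"
    by (rule deq_cong) (use Suc in auto)
  also have "\<dots> \<sim> []" using ggS[of "Suc k"] Suc by simp
  finally show ?case .
qed

lemma sw: "1 \<le> k \<Longrightarrow> Suc k \<le> n - 1 \<Longrightarrow> [S (Suc k)] @ ww k \<sim> ww (Suc k) @ [S (Suc k)]"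
proof -
  assume a: "1 \<le> k" "Suc k \<le> n - 1"
  have "[S (Suc k)] @ ww k = ([S (Suc k)] @ ww k) @ [] @ []" by simp
  also have "\<dots> \<sim> ([S (Suc k)] @ ww k) @ [S (Suc k), S (Suc k)] @ []"
    by (rule stepS[OF ggS, where a="[S (Suc k)] @ ww k" and b="[]"]) (use a in auto)
  also have "\<dots> = ww (Suc k) @ [S (Suc k)]" using a by (simp add: ww_Suc)
  finally show ?thesis .
qed


lemma W3: "2 \<le> j \<Longrightarrow> j + 1 \<le> k \<Longrightarrow> k \<le> n - 1 \<Longrightarrow> [S j] @ ww k \<sim> ww k @ [S j]"
proof (induction k)
  case 0 then show ?case by simp
next
  case (Suc k)
  show ?case
  proof (cases "j = k")
    case True
    then obtain m where m: "j = Suc m" "1 \<le> m" using Suc by (cases j) auto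
    have e: "ww (Suc k) = [S (Suc j), S j] @ ww m @ [S j, S (Suc j)]"
      using m True by (simp add: ww_Suc)
    have "[S j] @ ww (Suc k) \<sim> [S (Suc j), S j, S (Suc j)] @ ww m @ [S j, S (Suc j)]"
      by (rule stepI[OF braid[of j], where a="[]" and b="ww m @ [S j, S (Suc j)]"]) (use Suc m e in simp_all)
    also have "\<dots> \<sim> [S (Suc j), S j] @ ww m @ [S (Suc j), S j, S (Suc j)]"
      by (rule stepI[OF W2[of m "Suc j"], where a="[S (Suc j), S j]" and b="[S j, S (Suc j)]"]) (use Suc m True in simp_all)
    also have "\<dots> \<sim> [S (Suc j), S j] @ ww m @ [S j, S (Suc j), S j]"
      by (rule stepS[OF braid[of j], where a="[S (Suc j), S j] @ ww m" and b="[]"]) (use Suc m True in simp_all)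
    also have "\<dots> = ww (Suc k) @ [S j]" using e by simp
    finally show ?thesis .
  next
    case False
    then have jk: "j + 1 \<le> k" using Suc by simp
    have e: "ww (Suc k) = [S (Suc k)] @ ww k @ [S (Suc k)]" using jk Suc by (simp add: ww_Suc)
    have "[S j] @ ww (Suc k) \<sim> [S (Suc k), S j] @ ww k @ [S (Suc k)]"
      by (rule stepI[OF commSS[of j "Suc k"], where a="[]" and b="ww k @ [S (Suc k)]"]) (use Suc jk e in simp_all)
    also have "\<dots> \<sim> [S (Suc k)] @ ww k @ [S j, S (Suc k)]"
      by (rule stepI[OF Suc.IH, where a="[S (Suc k)]" and b="[S (Suc k)]"]) (use Suc jk in simp_all)
    also have "\<dots> \<sim> [S (Suc k)] @ ww k @ [S (Suc k), S j]"
      by (rule stepI[OF commSS[of j "Suc k"], where a="[S (Suc k)] @ ww k" and b="[]"]) (use Suc jk in simp_all)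
    also have "\<dots> = ww (Suc k) @ [S j]" using e by simp
    finally show ?thesis .
  qed
qed

lemma conj_comm:
  assumes v: "vw n X" and a: "rev X @ A @ X \<sim> A'" and b: "rev X @ B @ X \<sim> B'" and c: "A' @ B' \<sim> B' @ A'"
  shows "A @ B \<sim> B @ A"
proof -
  have ex: "\<And>P Q. P @ Q \<sim> X @ (rev X @ P @ X) @ (rev X @ Q @ X) @ rev X"
  proof -
    fix P Q :: "gen list"
    have "P @ Q = [] @ [] @ (P @ Q)" by simp
    also have "\<dots> \<sim> [] @ (X @ rev X) @ (P @ Q)" by (rule stepS[OF inv[OF v], where a="[]" and b="P @ Q"]) simp_all
    also have "\<dots> = (X @ rev X @ P) @ [] @ (Q)" by simp
    also have "\<dots> \<sim> (X @ rev X @ P) @ (X @ rev X) @ Q" by (rule stepS[OF inv[OF v], where a="X @ rev X @ P" and b="Q"]) simp_all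
    also have "\<dots> = (X @ rev X @ P @ X @ rev X @ Q) @ [] @ []" by simp
    also have "\<dots> \<sim> (X @ rev X @ P @ X @ rev X @ Q) @ (X @ rev X) @ []" by (rule stepS[OF inv[OF v], where a="X @ rev X @ P @ X @ rev X @ Q" and b="[]"]) simp_all
    finally show "P @ Q \<sim> X @ (rev X @ P @ X) @ (rev X @ Q @ X) @ rev X" by simp
  qed
  have "A @ B \<sim> X @ (rev X @ A @ X) @ (rev X @ B @ X) @ rev X" by (rule ex)
  also have "\<dots> \<sim> X @ A' @ (rev X @ B @ X) @ rev X" by (rule stepI[OF a, where a="X" and b="(rev X @ B @ X) @ rev X"]) simp_all
  also have "\<dots> \<sim> X @ A' @ B' @ rev X" by (rule stepI[OF b, where a="X @ A'" and b="rev X"]) simp_all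
  also have "\<dots> \<sim> X @ B' @ A' @ rev X" by (rule stepI[OF c, where a="X" and b="rev X"]) simp_all
  also have "\<dots> \<sim> X @ (rev X @ B @ X) @ A' @ rev X" by (rule stepS[OF b, where a="X" and b="A' @ rev X"]) simp_all
  also have "\<dots> \<sim> X @ (rev X @ B @ X) @ (rev X @ A @ X) @ rev X" by (rule stepS[OF a, where a="X @ (rev X @ B @ X)" and b="rev X"]) simp_all
  also have "\<dots> \<sim> B @ A" by (rule deq.sym, rule ex)
  finally show ?thesis .
qed

lemma C1: assumes "3 \<le> n" shows "ww 1 @ ww 2 \<sim> ww 2 @ ww 1"
proof -
  have n1: "1 \<le> n - 1" "2 \<le> n - 1" using assms by auto
  have "ww 1 @ ww 2 = [S 1, S1', S 2] @ [S 1, S1'] @ [S 2]" by (simp add: ww_def numeral_2_eq_2)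
  also have "\<dots> \<sim> [S 1, S1', S 2] @ [S1', S 1] @ [S 2]"
    by (rule stepS[OF commPS[of 1], where a="[S 1, S1', S 2]" and b="[S 2]"]) (use n1 in simp_all)
  also have "\<dots> \<sim> [S 1] @ [S 2, S1', S 2] @ [S 1, S 2]"
    by (rule stepI[OF braidP, where a="[S 1]" and b="[S 1, S 2]"]) (use assms in simp_all)
  also have "\<dots> \<sim> [S 1, S 2, S1'] @ [S 1, S 2, S 1] @ []"
    by (rule stepS[OF braid[of 1], where a="[S 1, S 2, S1']" and b="[]"]) (use n1 in \<open>simp_all add: numeral_2_eq_2\<close>)
  also have "\<dots> \<sim> [S 1, S 2] @ [S 1, S1'] @ [S 2, S 1]"
    by (rule stepI[OF commPS[of 1], where a="[S 1, S 2]" and b="[S 2, S 1]"]) (use n1 in simp_all)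
  also have "\<dots> \<sim> [S 2, S 1, S 2] @ [S1', S 2, S 1]"
    by (rule stepI[OF braid[of 1], where a="[]" and b="[S1', S 2, S 1]"]) (use n1 in \<open>simp_all add: numeral_2_eq_2\<close>)
  also have "\<dots> \<sim> [S 2, S 1] @ [S1', S 2, S1'] @ [S 1]"
    by (rule stepS[OF braidP, where a="[S 2, S 1]" and b="[S 1]"]) (use assms in simp_all)
  also have "\<dots> \<sim> [S 2, S 1, S1', S 2] @ [S 1, S1'] @ []"
    by (rule stepI[OF commPS[of 1], where a="[S 2, S 1, S1', S 2]" and b="[]"]) (use n1 in simp_all)
  also have "\<dots> = ww 2 @ ww 1" by (simp add: ww_def numeral_2_eq_2)
  finally show ?thesis .
qed

lemma Cp: "1 \<le> p \<Longrightarrow> Suc p \<le> n - 1 \<Longrightarrow> ww p @ ww (Suc p) \<sim> ww (Suc p) @ ww p"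
proof (induction p rule: nat_induct_at_least)
  case base then show ?case using C1 by (simp add: numeral_2_eq_2)
next
  case (Suc m)
  define p where "p = Suc m"
  have pm: "1 \<le> m" "Suc p \<le> n - 1" "p = Suc m" using Suc p_def by auto
  have ep: "ww p = [S p] @ ww m @ [S p]" using pm by (simp add: ww_Suc)
  have eq: "ww (Suc p) = [S (Suc p), S p] @ ww m @ [S p, S (Suc p)]" using pm by (simp add: ww_Suc)
  have v: "vw n [S p, S (Suc p)]" using pm by (simp add: vw_def valid_gen_def)
  have A: "rev [S p, S (Suc p)] @ ww p @ [S p, S (Suc p)] \<sim> ww m"
  proof -
    have "rev [S p, S (Suc p)] @ ww p @ [S p, S (Suc p)] = [S (Suc p)] @ [S p, S p] @ (ww m @ [S p, S p, S (Suc p)])"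
      using ep by simp
    also have "\<dots> \<sim> [S (Suc p)] @ [] @ (ww m @ [S p, S p, S (Suc p)])"
      by (rule stepI[OF ggS[of p], where a="[S (Suc p)]" and b="ww m @ [S p, S p, S (Suc p)]"]) (use pm in simp_all)
    also have "\<dots> = ([S (Suc p)] @ ww m) @ [S p, S p] @ [S (Suc p)]" by simp
    also have "\<dots> \<sim> ([S (Suc p)] @ ww m) @ [] @ [S (Suc p)]"
      by (rule stepI[OF ggS[of p], where a="[S (Suc p)] @ ww m" and b="[S (Suc p)]"]) (use pm in simp_all)
    also have "\<dots> \<sim> [] @ (ww m @ [S (Suc p)]) @ [S (Suc p)]"
      by (rule stepI[OF W2[of m "Suc p"], where a="[]" and b="[S (Suc p)]"]) (use pm in simp_all)
    also have "\<dots> \<sim> ww m @ [] @ []"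
      by (rule stepI[OF ggS[of "Suc p"], where a="ww m" and b="[]"]) (use pm in simp_all)
    finally show ?thesis by simp
  qed
  have B: "rev [S p, S (Suc p)] @ ww (Suc p) @ [S p, S (Suc p)] \<sim> ww p"
  proof -
    have "rev [S p, S (Suc p)] @ ww (Suc p) @ [S p, S (Suc p)] = [S (Suc p), S p, S (Suc p)] @ ([S p] @ ww m @ [S p, S (Suc p), S p, S (Suc p)])"
      using eq by simp
    also have "\<dots> \<sim> [S p, S (Suc p), S p] @ ([S p] @ ww m @ [S p, S (Suc p), S p, S (Suc p)])"
      by (rule stepS[OF braid[of p], where a="[]" and b="[S p] @ ww m @ [S p, S (Suc p), S p, S (Suc p)]"]) (use pm in simp_all)
    also have "\<dots> = [S p, S (Suc p)] @ [S p, S p] @ (ww m @ [S p, S (Suc p), S p, S (Suc p)])" by simp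
    also have "\<dots> \<sim> [S p, S (Suc p)] @ [] @ (ww m @ [S p, S (Suc p), S p, S (Suc p)])"
      by (rule stepI[OF ggS[of p], where a="[S p, S (Suc p)]" and b="ww m @ [S p, S (Suc p), S p, S (Suc p)]"]) (use pm in simp_all)
    also have "\<dots> \<sim> ([S p, S (Suc p)] @ ww m @ [S p]) @ [S p, S (Suc p), S p] @ []"
      by (rule stepS[OF braid[of p], where a="[S p, S (Suc p)] @ ww m @ [S p]" and b="[]"]) (use pm in simp_all)
    also have "\<dots> = ([S p, S (Suc p)] @ ww m) @ [S p, S p] @ [S (Suc p), S p]" by simp
    also have "\<dots> \<sim> ([S p, S (Suc p)] @ ww m) @ [] @ [S (Suc p), S p]"
      by (rule stepI[OF ggS[of p], where a="[S p, S (Suc p)] @ ww m" and b="[S (Suc p), S p]"]) (use pm in simp_all)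
    also have "\<dots> \<sim> [S p] @ (ww m @ [S (Suc p)]) @ [S (Suc p), S p]"
      by (rule stepI[OF W2[of m "Suc p"], where a="[S p]" and b="[S (Suc p), S p]"]) (use pm in simp_all)
    also have "\<dots> \<sim> ([S p] @ ww m) @ [] @ [S p]"
      by (rule stepI[OF ggS[of "Suc p"], where a="[S p] @ ww m" and b="[S p]"]) (use pm in simp_all)
    also have "\<dots> = ww p" using ep by simp
    finally show ?thesis .
  qed
  have C: "ww m @ ww p \<sim> ww p @ ww m" using Suc pm by simp
  show ?case using conj_comm[OF v A B C] p_def by simp
qed

lemma part1: "Suc p \<le> q \<Longrightarrow> 1 \<le> p \<Longrightarrow> q \<le> n - 1 \<Longrightarrow> ww q @ ww p \<sim> ww p @ ww q"
proof (induction q rule: nat_induct_at_least)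
  case base then show ?case using Cp by (auto intro: deq.sym)
next
  case (Suc q)
  have e: "ww (Suc q) = [S (Suc q)] @ ww q @ [S (Suc q)]" using Suc by (simp add: ww_Suc)
  have "ww (Suc q) @ ww p \<sim> ([S (Suc q)] @ ww q) @ (ww p @ [S (Suc q)]) @ []"
    by (rule stepI[OF W2[of p "Suc q"], where a="[S (Suc q)] @ ww q" and b="[]"]) (use Suc e in simp_all)
  also have "\<dots> \<sim> [S (Suc q)] @ (ww p @ ww q) @ [S (Suc q)]"
    by (rule stepI[OF Suc.IH, where a="[S (Suc q)]" and b="[S (Suc q)]"]) (use Suc in simp_all)
  also have "\<dots> \<sim> [] @ (ww p @ [S (Suc q)]) @ (ww q @ [S (Suc q)])"
    by (rule stepI[OF W2[of p "Suc q"], where a="[]" and b="ww q @ [S (Suc q)]"]) (use Suc in simp_all)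
  also have "\<dots> = ww p @ ww (Suc q)" using e by simp
  finally show ?case .
qed


lemma K1': "2 \<le> k \<Longrightarrow> k \<le> n - 1 \<Longrightarrow> [S 1] @ ww k \<sim> ww 1 @ ww k @ [S 1]"
proof (induction k rule: nat_induct_at_least)
  case base
  have n3: "3 \<le> n" "1 \<le> n - 1" "2 \<le> n - 1" using base by auto
  have "ww 1 @ ww 2 @ [S 1] = [] @ (ww 1 @ ww 2) @ [S 1]" by simp
  also have "\<dots> \<sim> [] @ (ww 2 @ ww 1) @ [S 1]" by (rule stepI[OF C1[OF n3(1)], where a="[]" and b="[S 1]"]) simp_all
  also have "\<dots> \<sim> [S 2, S 1, S1', S 2, S 1] @ [S 1, S1'] @ []"
    by (rule stepI[OF commPS[of 1], where a="[S 2, S 1, S1', S 2, S 1]" and b="[]"]) (use n3 in \<open>simp_all add: ww_def numeral_2_eq_2\<close>)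
  also have "\<dots> \<sim> [S 2, S 1, S1', S 2] @ [] @ [S1']"
    by (rule stepI[OF ggS[of 1], where a="[S 2, S 1, S1', S 2]" and b="[S1']"]) (use n3 in simp_all)
  also have "\<dots> \<sim> [S 2, S 1] @ [S 2, S1', S 2] @ []"
    by (rule stepI[OF braidP[OF n3(1)], where a="[S 2, S 1]" and b="[]"]) simp_all
  also have "\<dots> \<sim> [] @ [S 1, S 2, S 1] @ [S1', S 2]"
    by (rule stepS[OF braid[of 1], where a="[]" and b="[S1', S 2]"]) (use n3 in \<open>simp_all add: numeral_2_eq_2\<close>)
  also have "\<dots> = [S 1] @ ww 2" by (simp add: ww_def numeral_2_eq_2)
  finally show ?case by (rule deq.sym)
next
  case (Suc k)
  have e: "ww (Suc k) = [S (Suc k)] @ ww k @ [S (Suc k)]" using Suc by (simp add: ww_Suc)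
  have "[S 1] @ ww (Suc k) \<sim> [S (Suc k), S 1] @ ww k @ [S (Suc k)]"
    by (rule stepI[OF commSS[of 1 "Suc k"], where a="[]" and b="ww k @ [S (Suc k)]"]) (use Suc e in simp_all)
  also have "\<dots> \<sim> [S (Suc k)] @ (ww 1 @ ww k @ [S 1]) @ [S (Suc k)]"
    by (rule stepI[OF Suc.IH, where a="[S (Suc k)]" and b="[S (Suc k)]"]) (use Suc in simp_all)
  also have "\<dots> \<sim> [] @ (ww 1 @ [S (Suc k)]) @ (ww k @ [S 1, S (Suc k)])"
    by (rule stepI[OF W2[of 1 "Suc k"], where a="[]" and b="ww k @ [S 1, S (Suc k)]"]) (use Suc in simp_all)
  also have "\<dots> \<sim> (ww 1 @ [S (Suc k)] @ ww k) @ [S (Suc k), S 1] @ []"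
    by (rule stepI[OF commSS[of 1 "Suc k"], where a="ww 1 @ [S (Suc k)] @ ww k" and b="[]"]) (use Suc in simp_all)
  also have "\<dots> = ww 1 @ ww (Suc k) @ [S 1]" using e by simp
  finally show ?case .
qed

lemma K1: "2 \<le> k \<Longrightarrow> k \<le> n - 1 \<Longrightarrow> ww k @ [S 1] \<sim> ww 1 @ [S 1] @ ww k"
proof -
  assume a: "2 \<le> k" "k \<le> n - 1"
  have "ww 1 @ [S 1] @ ww k \<sim> ww 1 @ (ww 1 @ ww k @ [S 1]) @ []"
    by (rule stepI[OF K1'[OF a], where a="ww 1" and b="[]"]) simp_all
  also have "\<dots> \<sim> [] @ [] @ (ww k @ [S 1])"
    by (rule stepI[OF ww_inv[of 1], where a="[]" and b="ww k @ [S 1]"]) (use n2 in simp_all)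
  finally show ?thesis by (auto intro: deq.sym)
qed

lemma W3w: assumes "2 \<le> a" "b \<le> k" "k \<le> n - 1" shows "map S [a..<b] @ ww k \<sim> ww k @ map S [a..<b]"
proof (rule comm_words, intro ballI)
  fix g assume "g \<in> set (map S [a..<b])"
  then obtain j where "g = S j" "a \<le> j" "j < b" by auto
  then show "[g] @ ww k \<sim> ww k @ [g]" using W3[of j k] assms by simp
qed

lemma W1c: "2 \<le> k \<Longrightarrow> k \<le> n - 1 \<Longrightarrow> ww 1 @ ww k @ ww 1 \<sim> ww k"
proof -
  assume a: "2 \<le> k" "k \<le> n - 1"
  have "ww 1 @ ww k @ ww 1 \<sim> ww 1 @ (ww 1 @ ww k) @ []"
    by (rule stepI[OF part1[of 1 k], where a="ww 1" and b="[]"]) (use a in simp_all)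
  also have "\<dots> \<sim> [] @ [] @ ww k"
    by (rule stepI[OF ww_inv[of 1], where a="[]" and b="ww k"]) (use n2 in simp_all)
  finally show ?thesis by simp
qed

lemma tw_Suc: "1 \<le> p \<Longrightarrow> tw (Suc p) = tw p @ [S p]" by (simp add: tw_def)
lemma tw2: "tw 2 = [S 1]" by (simp add: tw_def numeral_2_eq_2)
lemma tpow_Suc: "tpow q (Suc i) = tw q @ tpow q i" by (simp add: tpow_def)
lemma tpow1: "tpow q 1 = tw q" by (simp add: tpow_def)

lemma T2: "1 \<le> p \<Longrightarrow> p \<le> n - 1 \<Longrightarrow> tw (Suc p) @ ww p \<sim> ww 1 @ tw (Suc p)"
proof (induction p rule: nat_induct_at_least)
  case base
  have "tw (Suc 1) @ ww 1 = [S 1] @ [S 1, S1'] @ []" by (simp add: tw_def ww_def)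
  also have "\<dots> \<sim> [S 1] @ [S1', S 1] @ []"
    by (rule stepS[OF commPS[of 1], where a="[S 1]" and b="[]"]) (use n2 in simp_all)
  also have "\<dots> = ww 1 @ tw (Suc 1)" by (simp add: tw_def ww_def)
  finally show ?case .
next
  case (Suc m)
  have "tw (Suc (Suc m)) @ ww (Suc m) = tw (Suc m) @ [S (Suc m), S (Suc m)] @ (ww m @ [S (Suc m)])"
    using Suc by (simp add: tw_Suc ww_Suc)
  also have "\<dots> \<sim> [] @ (tw (Suc m) @ ww m) @ [S (Suc m)]"
    by (rule stepI[OF ggS[of "Suc m"], where a="tw (Suc m)" and b="ww m @ [S (Suc m)]"]) (use Suc in simp_all)
  also have "\<dots> \<sim> [] @ (ww 1 @ tw (Suc m)) @ [S (Suc m)]"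
    by (rule stepI[OF Suc.IH, where a="[]" and b="[S (Suc m)]"]) (use Suc in simp_all)
  also have "\<dots> = ww 1 @ tw (Suc (Suc m))" using Suc by (simp add: tw_Suc)
  finally show ?case .
qed

lemma tw_split: assumes "1 \<le> p" "p + 2 \<le> q"
  shows "tw q = [S 1] @ map S [2..<Suc p] @ [S (Suc p)] @ map S [Suc (Suc p)..<q]"
proof -
  obtain d where d: "q = Suc (Suc p) + d" using assms by (metis add_2_eq_Suc' le_Suc_ex plus_1_eq_Suc)
  have "[1..<q] = [1..<Suc (Suc p)] @ [Suc (Suc p)..<q]" using d upt_add_eq_append[of 1 "Suc (Suc p)" d] by simp
  also have "[1..<Suc (Suc p)] = [1..<Suc p] @ [Suc p]" by simp
  also have "[1..<Suc p] = 1 # [2..<Suc p]" using assms by (simp del: upt_Suc add: upt_conv_Cons numeral_2_eq_2)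
  finally show ?thesis by (simp del: upt_Suc add: tw_def)
qed

lemma T1: assumes "1 \<le> p" "p + 2 \<le> q" "q \<le> n" shows "tw q @ ww p \<sim> ww 1 @ ww (Suc p) @ tw q"
proof -
  let ?A = "map S [2..<Suc p]" and ?B = "map S [Suc (Suc p)..<q]"
  have "tw q @ ww p = ([S 1] @ ?A @ [S (Suc p)]) @ (?B @ ww p) @ []" using tw_split[OF assms(1,2)] by (simp del: upt_Suc)
  also have "\<dots> \<sim> ([S 1] @ ?A @ [S (Suc p)]) @ (ww p @ ?B) @ []"
    by (rule stepI[OF W2w[of p "Suc (Suc p)" q], where a="[S 1] @ ?A @ [S (Suc p)]" and b="[]"]) (use assms in \<open>simp_all del: upt_Suc\<close>)
  also have "\<dots> \<sim> ([S 1] @ ?A) @ (ww (Suc p) @ [S (Suc p)]) @ ?B"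
    by (rule stepI[OF sw[of p], where a="[S 1] @ ?A" and b="?B"]) (use assms in \<open>simp_all del: upt_Suc\<close>)
  also have "\<dots> \<sim> [S 1] @ (ww (Suc p) @ ?A) @ ([S (Suc p)] @ ?B)"
    by (rule stepI[OF W3w[of 2 "Suc p" "Suc p"], where a="[S 1]" and b="[S (Suc p)] @ ?B"]) (use assms in \<open>simp_all del: upt_Suc\<close>)
  also have "\<dots> \<sim> [] @ (ww 1 @ ww (Suc p) @ [S 1]) @ (?A @ [S (Suc p)] @ ?B)"
    by (rule stepI[OF K1'[of "Suc p"], where a="[]" and b="?A @ [S (Suc p)] @ ?B"]) (use assms in \<open>simp_all del: upt_Suc\<close>)
  also have "\<dots> = ww 1 @ ww (Suc p) @ tw q" using tw_split[OF assms(1,2)] by (simp del: upt_Suc)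
  finally show ?thesis .
qed


lemma B3: assumes "2 \<le> p" "p < q" "q \<le> n - 1" shows "ww q @ tw p \<sim> ww 1 @ tw p @ ww q"
proof -
  let ?A = "map S [2..<p]"
  have tp: "tw p = [S 1] @ ?A" using assms by (simp add: tw_def upt_conv_Cons numeral_2_eq_2)
  have "ww q @ tw p = [] @ (ww q @ [S 1]) @ ?A" using tp by simp
  also have "\<dots> \<sim> [] @ (ww 1 @ [S 1] @ ww q) @ ?A"
    by (rule stepI[OF K1[of q], where a="[]" and b="?A"]) (use assms in simp_all)
  also have "\<dots> \<sim> (ww 1 @ [S 1]) @ (?A @ ww q) @ []"
    by (rule stepS[OF W3w[of 2 p q], where a="ww 1 @ [S 1]" and b="[]"]) (use assms in simp_all)
  also have "\<dots> = ww 1 @ tw p @ ww q" using tp by simp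
  finally show ?thesis .
qed

lemma part3: "1 \<le> i \<Longrightarrow> i \<le> p - 1 \<Longrightarrow> 2 \<le> p \<Longrightarrow> p < q \<Longrightarrow> q \<le> n - 1 \<Longrightarrow>
   ww q @ tpow p i \<sim> ww i @ tpow p i @ ww q"
proof (induction i rule: nat_induct_at_least)
  case base then show ?case using B3 by (simp add: tpow_def)
next
  case (Suc i)
  have "ww q @ tpow p (Suc i) = [] @ (ww q @ tw p) @ tpow p i" by (simp add: tpow_Suc)
  also have "\<dots> \<sim> [] @ (ww 1 @ tw p @ ww q) @ tpow p i"
    by (rule stepI[OF B3[of p q], where a="[]" and b="tpow p i"]) (use Suc in simp_all)
  also have "\<dots> \<sim> (ww 1 @ tw p) @ (ww i @ tpow p i @ ww q) @ []"
    by (rule stepI[OF Suc.IH, where a="ww 1 @ tw p" and b="[]"]) (use Suc in simp_all)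
  also have "\<dots> \<sim> ww 1 @ (ww 1 @ ww (Suc i) @ tw p) @ (tpow p i @ ww q)"
    by (rule stepI[OF T1[of i p], where a="ww 1" and b="tpow p i @ ww q"]) (use Suc in simp_all)
  also have "\<dots> \<sim> [] @ [] @ (ww (Suc i) @ tw p @ tpow p i @ ww q)"
    by (rule stepI[OF ww_inv[of 1], where a="[]" and b="ww (Suc i) @ tw p @ tpow p i @ ww q"]) (use n2 in simp_all)
  also have "\<dots> = ww (Suc i) @ tpow p (Suc i) @ ww q" by (simp add: tpow_Suc)
  finally show ?case .
qed

lemma part2: "1 \<le> i \<Longrightarrow> i \<le> q - 1 \<Longrightarrow> 1 \<le> p \<Longrightarrow> p < q \<Longrightarrow> q \<le> n \<Longrightarrow>
   tpow q i @ ww p \<sim> RR p q i"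
proof (induction i rule: nat_induct_at_least)
  case base
  show ?case
  proof (cases "q = p + 1")
    case True
    then show ?thesis using T2[of p] base by (simp add: RR_def tpow_def)
  next
    case False
    then show ?thesis using T1[of p q] base by (simp add: RR_def tpow_def)
  qed
next
  case (Suc i)
  have IH: "tpow q i @ ww p \<sim> RR p q i" using Suc by simp
  have "tpow q (Suc i) @ ww p = tw q @ (tpow q i @ ww p)" by (simp add: tpow_Suc)
  also have "\<dots> \<sim> tw q @ RR p q i @ []" by (rule stepI[OF IH, where a="tw q" and b="[]"]) simp_all
  also have "\<dots> \<sim> RR p q (Suc i)"
  proof (cases "q = p + i")
    case True
    have "tw q @ RR p q i @ [] = [] @ (tw q @ ww i) @ tpow q i" using True by (simp add: RR_def)
    also have "\<dots> \<sim> [] @ (ww 1 @ ww (Suc i) @ tw q) @ tpow q i"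
      by (rule stepI[OF T1[of i q], where a="[]" and b="tpow q i"]) (use Suc in simp_all)
    also have "\<dots> = RR p q (Suc i)" using True by (simp add: RR_def tpow_Suc)
    finally show ?thesis .
  next
    case False
    show ?thesis
    proof (cases "q > p + i")
      case gt: True
      have "tw q @ RR p q i @ [] = [] @ (tw q @ ww i) @ (ww (p + i) @ tpow q i)" using gt by (simp add: RR_def)
      also have "\<dots> \<sim> [] @ (ww 1 @ ww (Suc i) @ tw q) @ (ww (p + i) @ tpow q i)"
        by (rule stepI[OF T1[of i q], where a="[]" and b="ww (p + i) @ tpow q i"]) (use Suc in simp_all)
      also have "\<dots> \<sim> RR p q (Suc i)"
      proof (cases "q = Suc (p + i)")
        case True
        have "[] @ (ww 1 @ ww (Suc i) @ tw q) @ (ww (p + i) @ tpow q i) = (ww 1 @ ww (Suc i)) @ (tw (Suc (p + i)) @ ww (p + i)) @ tpow q i"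
          using True by simp
        also have "\<dots> \<sim> (ww 1 @ ww (Suc i)) @ (ww 1 @ tw (Suc (p + i))) @ tpow q i"
          by (rule stepI[OF T2[of "p + i"], where a="ww 1 @ ww (Suc i)" and b="tpow q i"]) (use Suc True in simp_all)
        also have "\<dots> \<sim> [] @ ww (Suc i) @ (tw q @ tpow q i)"
          by (rule stepI[OF W1c[of "Suc i"], where a="[]" and b="tw q @ tpow q i"]) (use Suc True in simp_all)
        also have "\<dots> = RR p q (Suc i)" using True by (simp add: RR_def tpow_Suc)
        finally show ?thesis .
      next
        case False
        have "[] @ (ww 1 @ ww (Suc i) @ tw q) @ (ww (p + i) @ tpow q i) = (ww 1 @ ww (Suc i)) @ (tw q @ ww (p + i)) @ tpow q i"
          by simp
        also have "\<dots> \<sim> (ww 1 @ ww (Suc i)) @ (ww 1 @ ww (Suc (p + i)) @ tw q) @ tpow q i"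
          by (rule stepI[OF T1[of "p + i" q], where a="ww 1 @ ww (Suc i)" and b="tpow q i"]) (use Suc gt False in simp_all)
        also have "\<dots> \<sim> [] @ ww (Suc i) @ (ww (Suc (p + i)) @ tw q @ tpow q i)"
          by (rule stepI[OF W1c[of "Suc i"], where a="[]" and b="ww (Suc (p + i)) @ tw q @ tpow q i"]) (use Suc gt False in simp_all)
        also have "\<dots> = RR p q (Suc i)" using gt False by (simp add: RR_def tpow_Suc)
        finally show ?thesis .
      qed
      finally show ?thesis .
    next
      case lt: False
      define j where "j = p + i - q"
      have j: "1 \<le> j" "j + 2 \<le> q" "p + Suc i - q = Suc j" using lt False Suc j_def by auto
      have "tw q @ RR p q i @ [] = [] @ (tw q @ ww j) @ (ww i @ tpow q i)" using lt False j_def by (simp add: RR_def)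
      also have "\<dots> \<sim> [] @ (ww 1 @ ww (Suc j) @ tw q) @ (ww i @ tpow q i)"
        by (rule stepI[OF T1[of j q], where a="[]" and b="ww i @ tpow q i"]) (use Suc j in simp_all)
      also have "\<dots> \<sim> (ww 1 @ ww (Suc j)) @ (ww 1 @ ww (Suc i) @ tw q) @ tpow q i"
        by (rule stepI[OF T1[of i q], where a="ww 1 @ ww (Suc j)" and b="tpow q i"]) (use Suc in simp_all)
      also have "\<dots> \<sim> [] @ ww (Suc j) @ (ww (Suc i) @ tw q @ tpow q i)"
        by (rule stepI[OF W1c[of "Suc j"], where a="[]" and b="ww (Suc i) @ tw q @ tpow q i"]) (use Suc j in simp_all)
      also have "\<dots> = RR p q (Suc i)" using lt False j by (simp add: RR_def tpow_Suc)
      finally show ?thesis .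
    qed
  qed
  finally show ?case by simp
qed

end

theorem mainTheorem5:
  fixes n :: nat
  assumes "n \<ge> 2"
  shows "(\<forall>p q. 1 \<le> p \<and> p < q \<and> q \<le> n - 1 \<longrightarrow>
            deq n (ww q @ ww p) (ww p @ ww q))
       \<and> (\<forall>p q i. 1 \<le> p \<and> p < q \<and> q \<le> n \<and> p \<le> n - 1 \<and> 1 \<le> i \<and> i \<le> q - 1 \<longrightarrow>
            deq n (tpow q i @ ww p)
              (if q = p + i then ww i @ tpow q i
               else if q > p + i then ww i @ ww (p + i) @ tpow q i
               else ww (p + i - q) @ ww i @ tpow q i))
       \<and> (\<forall>p q i. 2 \<le> p \<and> p < q \<and> q \<le> n - 1 \<and> 1 \<le> i \<and> i \<le> p - 1 \<longrightarrow>
            deq n (ww q @ tpow p i) (ww i @ tpow p i @ ww q))"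
proof (intro conjI allI impI)
  fix p q assume "1 \<le> p \<and> p < q \<and> q \<le> n - 1"
  then show "deq n (ww q @ ww p) (ww p @ ww q)" using part1[OF assms, of p q] by auto
next
  fix p q i assume "1 \<le> p \<and> p < q \<and> q \<le> n \<and> p \<le> n - 1 \<and> 1 \<le> i \<and> i \<le> q - 1"
  then show "deq n (tpow q i @ ww p)
              (if q = p + i then ww i @ tpow q i
               else if q > p + i then ww i @ ww (p + i) @ tpow q i
               else ww (p + i - q) @ ww i @ tpow q i)"
  proof -
    have "deq n (tpow q i @ ww p) (RR p q i)" using part2[OF assms, of i q p] \<open>1 \<le> p \<and> p < q \<and> q \<le> n \<and> p \<le> n - 1 \<and> 1 \<le> i \<and> i \<le> q - 1\<close> by auto
    then show ?thesis unfolding RR_def .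
  qed
next
  fix p q i assume "2 \<le> p \<and> p < q \<and> q \<le> n - 1 \<and> 1 \<le> i \<and> i \<le> p - 1"
  then show "deq n (ww q @ tpow p i) (ww i @ tpow p i @ ww q)" using part3[OF assms, of i p q] by auto
qed

end
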